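(* Let $M\in\mathbb{R}^{n\times n}$ be symmetric positive definite, let $\delta_i,\delta_{i-1}>0$, let $\theta_{i-1},\theta_{i-2}\in\mathbb{R}^n$ and a control value $u$ be fixed, and let $\bar P(\cdot,u):\mathbb{R}^n\to\mathbb{R}$ be $L$-curvature bounded for some $L>0$. Define $$\bar E_i(\theta_i)=\frac{1}{2\delta_i^2}\Big\|\theta_i-\big(1+\tfrac{\delta_i}{\delta_{i-1}}\big)\theta_{i-1}+\tfrac{\delta_i}{\delta_{i-1}}\theta_{i-2}\Big\|_M^2+\bar P(\theta_i,u).$$ If $\delta_i<\sqrt{\sigma_{\min}(M)/L}$, then $\bar E_i$ is strongly convex in $\theta_i$ and its minimizer over $\theta_i\in\mathbb{R}^n$ is unique.
   Context: $\|x\|_M^2=x^TMx$; $\sigma_{\min}(M)$ denotes the smallest singular value of $M$. A function $\phi:\mathbb{R}^n\to\mathbb{R}$ is $L$-weakly convex if $\phi(x)+\frac{L}{2}\|x\|^2$ is convex; it is $L$-gradient continuous if it is differentiable and $\|\nabla\phi(x)-\nabla\phi(x')\|\le L\|x-x'\|$ for all $x,x'$; it is $L$-curvature bounded if both properties hold. *)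

theory Defs
  imports "HOL-Analysis.Analysis"
begin

definition Mnorm_sq :: "real^'n^'n \<Rightarrow> real^'n \<Rightarrow> real" where
  "Mnorm_sq M x = x \<bullet> (M *v x)"

definition sym_pos_def :: "real^'n^'n \<Rightarrow> bool" where
  "sym_pos_def M \<longleftrightarrow> transpose M = M \<and> (\<forall>x. x \<noteq> 0 \<longrightarrow> x \<bullet> (M *v x) > 0)"

definition sigma_min :: "real^'n^'n \<Rightarrow> real" where
  "sigma_min M = sqrt (Inf {lam. \<exists>v. v \<noteq> 0 \<and> (transpose M ** M) *v v = lam *s v})"

definition weakly_convex :: "real \<Rightarrow> (real^'n \<Rightarrow> real) \<Rightarrow> bool" where
  "weakly_convex L \<phi> \<longleftrightarrow> convex_on UNIV (\<lambda>x. \<phi> x + L / 2 * (norm x)\<^sup>2)"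

definition gradient_continuous :: "real \<Rightarrow> (real^'n \<Rightarrow> real) \<Rightarrow> bool" where
  "gradient_continuous L \<phi> \<longleftrightarrow>
     (\<exists>g. (\<forall>x. (\<phi> has_derivative (\<lambda>h. g x \<bullet> h)) (at x)) \<and>
          (\<forall>x x'. norm (g x - g x') \<le> L * norm (x - x')))"

definition curvature_bounded :: "real \<Rightarrow> (real^'n \<Rightarrow> real) \<Rightarrow> bool" where
  "curvature_bounded L \<phi> \<longleftrightarrow> weakly_convex L \<phi> \<and> gradient_continuous L \<phi>"

definition strongly_convex :: "(real^'n \<Rightarrow> real) \<Rightarrow> bool" where
  "strongly_convex f \<longleftrightarrow> (\<exists>\<mu>>0. convex_on UNIV (\<lambda>x. f x - \<mu> / 2 * (norm x)\<^sup>2))"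

end

theory Submission
  imports Defs
begin

lemma symM: fixes M :: "real^'n^'n" assumes "transpose M = M"
  shows "x \<bullet> (M *v y) = y \<bullet> (M *v x)"
proof -
  have "x \<bullet> (M *v y) = (x v* M) \<bullet> y" by (simp add: dot_lmul_matrix)
  also have "x v* M = M *v x" using assms by (metis transpose_matrix_vector)
  finally show ?thesis by (simp add: inner_commute)
qed

lemma quad_nonneg_lin_zero:
  fixes a b :: real
  assumes "\<forall>t. 2 * t * a + t^2 * b \<ge> 0" "a \<ge> 0"
  shows "a = 0"
proof (rule ccontr)
  assume "a \<noteq> 0" hence a: "a > 0" using assms by auto
  define t where "t = - a / (\<bar>b\<bar> + 1)"
  have d: "\<bar>b\<bar> + 1 > 0" by auto
  have tneg: "t < 0" using a d by (simp add: t_def)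
  have "t * \<bar>b\<bar> = - a * (\<bar>b\<bar> / (\<bar>b\<bar> + 1))" by (simp add: t_def)
  moreover have "\<bar>b\<bar> / (\<bar>b\<bar> + 1) \<le> 1" using d by simp
  ultimately have "t * \<bar>b\<bar> \<ge> - a" using a by (metis mult_le_cancel_left_pos mult_minus_left neg_le_iff_le mult.right_neutral)
  hence pos: "2 * a + t * \<bar>b\<bar> > 0" using a by linarith
  have "2 * t * a + t^2 * b \<le> 2 * t * a + t^2 * \<bar>b\<bar>" by (simp add: mult_left_mono)
  also have "\<dots> = t * (2 * a + t * \<bar>b\<bar>)" by (simp add: algebra_simps power2_eq_square)
  also have "\<dots> < 0" using tneg pos by (simp add: mult_neg_pos)
  finally show False using assms(1) by (meson not_le)
qed

lemma rayleigh:
  fixes M :: "real^'n^'n"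
  assumes "sym_pos_def M"
  shows "sigma_min M * (x \<bullet> x) \<le> x \<bullet> (M *v x)"
proof -
  have sym: "transpose M = M" and pd: "\<And>x. x \<noteq> 0 \<Longrightarrow> x \<bullet> (M *v x) > 0"
    using assms by (auto simp: sym_pos_def_def)
  define \<phi> where "\<phi> x = x \<bullet> (M *v x)" for x :: "real^'n"
  have cont: "continuous_on (sphere 0 1) \<phi>"
    unfolding \<phi>_def by (intro continuous_intros matrix_vector_mult_linear_continuous_on)
  have ne: "sphere (0::real^'n) 1 \<noteq> {}"
    by (simp add: sphere_eq_empty)
  obtain v where v: "v \<in> sphere 0 1" and vmin: "\<And>y. y \<in> sphere 0 1 \<Longrightarrow> \<phi> v \<le> \<phi> y"
    using continuous_attains_inf[OF compact_sphere ne cont] by blast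
  define lam where "lam = \<phi> v"
  have nv: "norm v = 1" using v by simp
  have vv: "v \<bullet> v = 1" using nv by (simp add: norm_eq_1)
  have bound: "lam * (y \<bullet> y) \<le> \<phi> y" for y
  proof (cases "y = 0")
    case True then show ?thesis by (simp add: \<phi>_def)
  next
    case False
    define z where "z = (1 / norm y) *\<^sub>R y"
    have "z \<in> sphere 0 1" using False by (simp add: z_def)
    hence "lam \<le> \<phi> z" using vmin lam_def by auto
    also have "\<phi> z = \<phi> y / (norm y)^2" unfolding z_def \<phi>_def
      by (simp add: matrix_vector_mult_scaleR power2_eq_square)
    finally have "lam * (norm y)^2 \<le> \<phi> y" using False by (simp add: field_simps)
    then show ?thesis by (simp add: power2_norm_eq_inner)
  qed
  define w where "w = M *v v - lam *\<^sub>R v"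
  have "\<forall>t. 2 * t * (w \<bullet> w) + t^2 * (\<phi> w - lam * (w \<bullet> w)) \<ge> 0"
  proof
    fix t :: real
    have z: "0 \<le> \<phi> (v + t *\<^sub>R w) - lam * ((v + t *\<^sub>R w) \<bullet> (v + t *\<^sub>R w))"
      using bound[of "v + t *\<^sub>R w"] by simp
    have e1: "\<phi> (v + t *\<^sub>R w) = \<phi> v + 2 * t * (w \<bullet> (M *v v)) + t^2 * \<phi> w"
      using symM[OF sym, of v w] unfolding \<phi>_def
      by (simp add: matrix_vector_right_distrib matrix_vector_mult_scaleR inner_add_left inner_add_right
          power2_eq_square algebra_simps)
    have e2: "(v + t *\<^sub>R w) \<bullet> (v + t *\<^sub>R w) = 1 + 2 * t * (w \<bullet> v) + t^2 * (w \<bullet> w)"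
      using vv by (simp add: inner_add_left inner_add_right inner_commute power2_eq_square algebra_simps)
    have e3: "w \<bullet> (M *v v) - lam * (w \<bullet> v) = w \<bullet> w"
      unfolding w_def by (simp add: inner_diff_right algebra_simps)
    have "\<phi> (v + t *\<^sub>R w) - lam * ((v + t *\<^sub>R w) \<bullet> (v + t *\<^sub>R w))
       = 2 * t * (w \<bullet> (M *v v) - lam * (w \<bullet> v)) + t^2 * (\<phi> w - lam * (w \<bullet> w))"
      unfolding e1 e2 lam_def by (simp add: algebra_simps)
    also have "\<dots> = 2 * t * (w \<bullet> w) + t^2 * (\<phi> w - lam * (w \<bullet> w))" using e3 by simp
    finally show "2 * t * (w \<bullet> w) + t^2 * (\<phi> w - lam * (w \<bullet> w)) \<ge> 0" using z by simp
  qed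
  hence "w \<bullet> w = 0" by (intro quad_nonneg_lin_zero) auto
  hence eig: "M *v v = lam *\<^sub>R v" unfolding w_def by simp
  have "(transpose M ** M) *v v = lam^2 *s v"
    using eig sym by (simp add: matrix_vector_mul_assoc[symmetric] matrix_vector_mult_scaleR
        scalar_mult_eq_scaleR power2_eq_square)
  moreover have "v \<noteq> 0" using nv by auto
  ultimately have mem: "lam^2 \<in> {lam. \<exists>v. v \<noteq> 0 \<and> (transpose M ** M) *v v = lam *s v}" by blast
  have bdd: "bdd_below {lam. \<exists>v. v \<noteq> 0 \<and> (transpose M ** M) *v v = lam *s v}"
  proof (rule bdd_belowI[of _ 0], clarify)
    fix l :: real and u :: "real^'n" assume u: "u \<noteq> 0" "(transpose M ** M) *v u = l *s u"
    have "l * (u \<bullet> u) = u \<bullet> ((transpose M ** M) *v u)" using u by (simp add: scalar_mult_eq_scaleR)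
    also have "\<dots> = (M *v u) \<bullet> (M *v u)"
      by (simp add: matrix_vector_mul_assoc[symmetric] transpose_matrix_vector dot_lmul_matrix[symmetric]
          inner_commute)
    also have "\<dots> \<ge> 0" by simp
    finally have "l * (u \<bullet> u) \<ge> 0" .
    moreover have "u \<bullet> u > 0" using u by simp
    ultimately show "0 \<le> l" by (simp add: zero_le_mult_iff)
  qed
  have lampos: "lam \<ge> 0" using pd[of v] \<open>v \<noteq> 0\<close> by (simp add: lam_def \<phi>_def)
  have "Inf {lam. \<exists>v. v \<noteq> 0 \<and> (transpose M ** M) *v v = lam *s v} \<le> lam^2"
    using cInf_lower[OF mem bdd] .
  hence "sigma_min M \<le> sqrt (lam^2)" unfolding sigma_min_def by (rule real_sqrt_le_mono)
  hence "sigma_min M \<le> lam" using lampos by simp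
  moreover have "lam * (x \<bullet> x) \<le> x \<bullet> (M *v x)" using bound[of x] by (simp add: \<phi>_def)
  ultimately show ?thesis using mult_right_mono[of "sigma_min M" lam "x \<bullet> x"] by simp
qed


lemma quad_key:
  fixes M :: "real^'n^'n"
  fixes s t :: real
  assumes sym: "transpose M = M"
  defines "B \<equiv> \<lambda>p q. p \<bullet> (M *v q) - s * (p \<bullet> q)"
  shows "(1 - t) * B p p + t * B q q - B ((1 - t) *\<^sub>R p + t *\<^sub>R q) ((1 - t) *\<^sub>R p + t *\<^sub>R q)
         = t * (1 - t) * B (p - q) (p - q)"
proof -
  have s1: "q \<bullet> (M *v p) = p \<bullet> (M *v q)" using symM[OF sym] by simp
  have s2: "q \<bullet> p = p \<bullet> q" by (simp add: inner_commute)
  have e: "B ((1 - t) *\<^sub>R p + t *\<^sub>R q) ((1 - t) *\<^sub>R p + t *\<^sub>R q)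
     = (1 - t)^2 * B p p + 2 * t * (1 - t) * B p q + t^2 * B q q"
    unfolding B_def
    by (simp add: matrix_vector_right_distrib matrix_vector_mult_scaleR inner_add_left inner_add_right
          s1 s2 power2_eq_square algebra_simps)
  have f: "B (p - q) (p - q) = B p p - 2 * B p q + B q q"
    unfolding B_def
    by (simp add: matrix_vector_mult_diff_distrib inner_diff_left inner_diff_right s1 s2 algebra_simps)
  show ?thesis unfolding e f by (simp add: power2_eq_square algebra_simps)
qed

lemma quad_convex:
  fixes M :: "real^'n^'n"
  assumes sym: "transpose M = M" and psd: "\<And>d. s * (d \<bullet> d) \<le> d \<bullet> (M *v d)"
  shows "convex_on UNIV (\<lambda>x. (x - c) \<bullet> (M *v (x - c)) - s * (x \<bullet> x))"
proof (rule convex_onI)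
  fix t :: real and x y :: "real^'n" assume t: "0 < t" "t < 1"
  define B where "B \<equiv> \<lambda>p q. p \<bullet> (M *v q) - s * (p \<bullet> q)"
  define p where "p = x - c"
  define q where "q = y - c"
  have z: "(1 - t) *\<^sub>R x + t *\<^sub>R y - c = (1 - t) *\<^sub>R p + t *\<^sub>R q"
    unfolding p_def q_def by (simp add: algebra_simps)
  have F: "(w - c) \<bullet> (M *v (w - c)) - s * (w \<bullet> w) = B (w - c) (w - c) - 2 * s * (c \<bullet> w) + s * (c \<bullet> c)"
    for w :: "real^'n"
    unfolding B_def by (simp add: inner_diff_left inner_diff_right inner_commute algebra_simps)
  have lin: "c \<bullet> ((1 - t) *\<^sub>R x + t *\<^sub>R y) = (1 - t) * (c \<bullet> x) + t * (c \<bullet> y)"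
    by (simp add: inner_add_right)
  have k: "(1 - t) * B p p + t * B q q - B ((1 - t) *\<^sub>R p + t *\<^sub>R q) ((1 - t) *\<^sub>R p + t *\<^sub>R q) \<ge> 0"
  proof -
    have "(1 - t) * B p p + t * B q q - B ((1 - t) *\<^sub>R p + t *\<^sub>R q) ((1 - t) *\<^sub>R p + t *\<^sub>R q)
         = t * (1 - t) * B (p - q) (p - q)" unfolding B_def by (rule quad_key[OF sym])
    moreover have "B (p - q) (p - q) \<ge> 0" using psd[of "p - q"] by (simp add: B_def)
    ultimately show ?thesis using t by simp
  qed
  have "(1 - t) *\<^sub>R x + t *\<^sub>R y - c = (1 - t) *\<^sub>R p + t *\<^sub>R q" by (rule z)
  have Fz: "((1 - t) *\<^sub>R x + t *\<^sub>R y - c) \<bullet> (M *v ((1 - t) *\<^sub>R x + t *\<^sub>R y - c)) - s * (((1 - t) *\<^sub>R x + t *\<^sub>R y) \<bullet> ((1 - t) *\<^sub>R x + t *\<^sub>R y))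
     = B ((1 - t) *\<^sub>R p + t *\<^sub>R q) ((1 - t) *\<^sub>R p + t *\<^sub>R q) - 2 * s * ((1 - t) * (c \<bullet> x) + t * (c \<bullet> y)) + s * (c \<bullet> c)"
    using F[of "(1 - t) *\<^sub>R x + t *\<^sub>R y"] unfolding z lin .
  have Fx: "(x - c) \<bullet> (M *v (x - c)) - s * (x \<bullet> x) = B p p - 2 * s * (c \<bullet> x) + s * (c \<bullet> c)"
    using F[of x] unfolding p_def .
  have Fy: "(y - c) \<bullet> (M *v (y - c)) - s * (y \<bullet> y) = B q q - 2 * s * (c \<bullet> y) + s * (c \<bullet> c)"
    using F[of y] unfolding q_def .
  have "B ((1 - t) *\<^sub>R p + t *\<^sub>R q) ((1 - t) *\<^sub>R p + t *\<^sub>R q) - 2 * s * ((1 - t) * (c \<bullet> x) + t * (c \<bullet> y)) + s * (c \<bullet> c)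
     \<le> (1 - t) * (B p p - 2 * s * (c \<bullet> x) + s * (c \<bullet> c)) + t * (B q q - 2 * s * (c \<bullet> y) + s * (c \<bullet> c))"
    using k by (simp add: algebra_simps)
  then show "(\<lambda>x. (x - c) \<bullet> (M *v (x - c)) - s * (x \<bullet> x)) ((1 - t) *\<^sub>R x + t *\<^sub>R y)
        \<le> (1 - t) * (\<lambda>x. (x - c) \<bullet> (M *v (x - c)) - s * (x \<bullet> x)) x
          + t * (\<lambda>x. (x - c) \<bullet> (M *v (x - c)) - s * (x \<bullet> x)) y"
    by (simp only: Fz Fx Fy)
qed (simp)


lemma exist_min:
  fixes E h :: "real^'n \<Rightarrow> real" and \<mu> :: real
  assumes mu: "\<mu> > 0" and hconv: "convex_on UNIV h"
    and hdef: "\<And>x. h x = E x - \<mu> / 2 * (norm x)\<^sup>2"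
    and cont: "continuous_on UNIV E"
  shows "\<exists>x. \<forall>y. E x \<le> E y"
proof -
  have hcont: "continuous_on UNIV h"
    unfolding hdef[abs_def] by (intro continuous_intros cont)
  have "compact (h ` cball 0 1)"
    by (rule compact_continuous_image[OF continuous_on_subset[OF hcont] compact_cball]) auto
  then obtain K where K: "\<And>y. y \<in> cball 0 1 \<Longrightarrow> \<bar>h y\<bar> \<le> K"
    using compact_imp_bounded bounded_iff by (metis image_eqI real_norm_def)
  have K0: "K \<ge> 0" using K[of 0] by auto
  have lb: "h x \<ge> - K - 2 * K * norm x" for x
  proof (cases "norm x \<ge> 1")
    case False
    then have "\<bar>h x\<bar> \<le> K" using K by auto
    then show ?thesis using K0 by (simp add: abs_le_iff) (smt (verit) norm_ge_zero mult_nonneg_nonneg)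
  next
    case True
    define r where "r = norm x"
    have r1: "r \<ge> 1" using True r_def by simp
    define t where "t = 1 / r"
    have t: "0 \<le> t" "t \<le> 1" using r1 by (auto simp: t_def)
    have "h ((1 - t) *\<^sub>R 0 + t *\<^sub>R x) \<le> (1 - t) * h 0 + t * h x"
      by (rule convex_onD[OF hconv t]) auto
    moreover have "(1 - t) *\<^sub>R 0 + t *\<^sub>R x \<in> cball 0 1" using r1 by (simp add: t_def r_def)
    ultimately have "- K \<le> (1 - t) * h 0 + t * h x" using K by (smt (verit))
    moreover have "(1 - t) * h 0 \<le> (1 - t) * K" using K[of 0] t by (intro mult_left_mono) auto
    ultimately have "- K - (1 - t) * K \<le> t * h x" by linarith
    hence "r * (- K - (1 - t) * K) \<le> r * (t * h x)" using r1 by (intro mult_left_mono) auto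
    also have "r * (t * h x) = h x" using r1 by (simp add: t_def)
    also have "r * (- K - (1 - t) * K) = - 2 * K * r + K" using r1 by (simp add: t_def field_simps)
    finally show ?thesis using K0 r_def by simp
  qed
  have Elb: "E x \<ge> \<mu> / 2 * (norm x)^2 - 2 * K * norm x - K" for x
    using lb[of x] hdef[of x] by simp
  define T where "T = {x. E x \<le> E 0}"
  define R where "R = max 1 (2 * (\<bar>E 0\<bar> + 3 * K) / \<mu>)"
  have bT: "norm x \<le> R" if "x \<in> T" for x
  proof (cases "norm x \<ge> 1")
    case False then show ?thesis by (simp add: R_def)
  next
    case True
    define r where "r = norm x"
    have r1: "r \<ge> 1" using True r_def by simp
    have "\<mu> / 2 * r^2 - 2 * K * r - K \<le> E 0" using Elb[of x] that T_def r_def by simp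
    moreover have "\<bar>E 0\<bar> \<le> \<bar>E 0\<bar> * r" using r1 by (simp add: mult_le_cancel_left1)
    moreover have "K \<le> K * r" using r1 K0 by (simp add: mult_le_cancel_left1)
    ultimately have "\<mu> / 2 * r * r \<le> (\<bar>E 0\<bar> + 3 * K) * r"
      by (simp add: power2_eq_square algebra_simps)
    hence "\<mu> / 2 * r \<le> \<bar>E 0\<bar> + 3 * K" using r1 by simp
    hence "r \<le> 2 * (\<bar>E 0\<bar> + 3 * K) / \<mu>" using mu by (simp add: field_simps)
    then show ?thesis unfolding R_def r_def by simp
  qed
  have "closed T" unfolding T_def
    by (intro closed_Collect_le cont continuous_on_const)
  moreover have "bounded T" using bT by (auto simp: bounded_iff)
  ultimately have cT: "compact T" by (simp add: compact_eq_bounded_closed)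
  have neT: "T \<noteq> {}" unfolding T_def by auto
  obtain x0 where x0: "x0 \<in> T" "\<And>y. y \<in> T \<Longrightarrow> E x0 \<le> E y"
    using continuous_attains_inf[OF cT neT continuous_on_subset[OF cont]] by blast
  have "E x0 \<le> E y" for y
  proof (cases "y \<in> T")
    case True then show ?thesis using x0 by auto
  next
    case False
    have "E x0 \<le> E 0" using x0(2)[of 0] by (simp add: T_def)
    then show ?thesis using False unfolding T_def by auto
  qed
  then show ?thesis by blast
qed

lemma unique_min:
  fixes E h :: "real^'n \<Rightarrow> real" and \<mu> :: real
  assumes mu: "\<mu> > 0" and hconv: "convex_on UNIV h"
    and hdef: "\<And>x. h x = E x - \<mu> / 2 * (norm x)\<^sup>2"
    and x: "\<forall>z. E x \<le> E z" and y: "\<forall>z. E y \<le> E z"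
  shows "x = y"
proof (rule ccontr)
  assume ne: "x \<noteq> y"
  define z where "z = (1 - 1/2) *\<^sub>R x + (1/2::real) *\<^sub>R y"
  have hz: "h z \<le> (1 - 1/2) * h x + (1/2) * h y"
    unfolding z_def by (rule convex_onD[OF hconv]) auto
  have zz: "z = (1/2::real) *\<^sub>R (x + y)" unfolding z_def by (simp add: algebra_simps)
  have nz: "(norm z)^2 = ((norm x)^2 + (norm y)^2) / 2 - (norm (x - y))^2 / 4"
  proof -
    have a1: "((1/2::real) *\<^sub>R (x + y)) \<bullet> ((1/2::real) *\<^sub>R (x + y)) = (x \<bullet> x + 2 * (x \<bullet> y) + y \<bullet> y) / 4"
      by (simp add: inner_add_left inner_add_right inner_commute)
    have a2: "(x - y) \<bullet> (x - y) = x \<bullet> x - 2 * (x \<bullet> y) + y \<bullet> y"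
      by (simp add: inner_diff_left inner_diff_right inner_commute)
    show ?thesis unfolding zz power2_norm_eq_inner a1 a2 by (simp add: field_simps)
  qed
  have d: "\<mu> * (norm (x - y))^2 > 0" using ne mu by simp
  have Exy: "E x = E y" using x y by (meson order_antisym)
  have "E z = h z + \<mu> / 2 * (norm z)^2" using hdef[of z] by simp
  also have "\<mu> / 2 * (norm z)^2 = \<mu> * (norm x)^2 / 4 + \<mu> * (norm y)^2 / 4 - \<mu> * (norm (x - y))^2 / 8"
    unfolding nz by (simp add: algebra_simps)
  finally have ez: "E z = h z + (\<mu> * (norm x)^2 / 4 + \<mu> * (norm y)^2 / 4 - \<mu> * (norm (x - y))^2 / 8)" .
  have hx: "h x = E x - \<mu> * (norm x)^2 / 2" using hdef[of x] by simp
  have hy: "h y = E y - \<mu> * (norm y)^2 / 2" using hdef[of y] by simp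
  have hz2: "h z \<le> h x / 2 + h y / 2" using hz by simp
  have "E z < E x" using ez hz2 hx hy Exy d by linarith
  then show False using x by (meson not_le)
qed


theorem lemma2:
  fixes M :: "real^'n^'n"
    and \<delta>i \<delta>im1 L :: real
    and \<theta>im1 \<theta>im2 :: "real^'n"
    and u :: 'u
    and Pbar :: "real^'n \<Rightarrow> 'u \<Rightarrow> real"
    and E :: "real^'n \<Rightarrow> real"
  assumes "sym_pos_def M"
    and "\<delta>i > 0" and "\<delta>im1 > 0"
    and "L > 0"
    and "curvature_bounded L (\<lambda>\<theta>. Pbar \<theta> u)"
    and "\<And>\<theta>. E \<theta> = 1 / (2 * \<delta>i\<^sup>2) *
            Mnorm_sq M (\<theta> - (1 + \<delta>i / \<delta>im1) *\<^sub>R \<theta>im1 + (\<delta>i / \<delta>im1) *\<^sub>R \<theta>im2)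
            + Pbar \<theta> u"
    and "\<delta>i < sqrt (sigma_min M / L)"
  shows "strongly_convex E \<and> (\<exists>!\<theta>. \<forall>\<theta>'. E \<theta> \<le> E \<theta>')"
proof -
  note spd = assms(1) and di = assms(2) and L = assms(4) and cb = assms(5) and Edef = assms(6)
  define s where "s = sigma_min M"
  have sym: "transpose M = M" using spd by (simp add: sym_pos_def_def)
  have psd: "\<And>d. s * (d \<bullet> d) \<le> d \<bullet> (M *v d)" unfolding s_def by (rule rayleigh[OF spd])
  have "sqrt (\<delta>i\<^sup>2) < sqrt (s / L)" using assms(7) di by (simp add: s_def)
  hence d2: "\<delta>i\<^sup>2 < s / L" by (simp only: real_sqrt_less_iff)
  have dpos: "\<delta>i\<^sup>2 > 0" using di by simp
  hence "L * \<delta>i\<^sup>2 < s" using d2 L by (simp add: field_simps)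
  define \<mu> where "\<mu> = s / \<delta>i\<^sup>2 - L"
  have mu: "\<mu> > 0" unfolding \<mu>_def using \<open>L * \<delta>i\<^sup>2 < s\<close> dpos by (simp add: field_simps)
  define c where "c = (1 + \<delta>i / \<delta>im1) *\<^sub>R \<theta>im1 - (\<delta>i / \<delta>im1) *\<^sub>R \<theta>im2"
  define a where "a = 1 / (2 * \<delta>i\<^sup>2)"
  have a0: "a \<ge> 0" unfolding a_def using dpos by simp
  have E2: "E x = a * ((x - c) \<bullet> (M *v (x - c))) + Pbar x u" for x
    unfolding Edef a_def Mnorm_sq_def c_def by (simp add: algebra_simps)
  define h where "h x = E x - \<mu> / 2 * (norm x)\<^sup>2" for x
  have wc: "convex_on UNIV (\<lambda>x. Pbar x u + L / 2 * (norm x)\<^sup>2)"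
    using cb by (simp add: curvature_bounded_def weakly_convex_def)
  have qc: "convex_on UNIV (\<lambda>x. a * ((x - c) \<bullet> (M *v (x - c)) - s * (x \<bullet> x)))"
    by (rule convex_on_cmul[OF a0 quad_convex[OF sym psd]])
  have hsplit: "h = (\<lambda>x. a * ((x - c) \<bullet> (M *v (x - c)) - s * (x \<bullet> x)) + (Pbar x u + L / 2 * (norm x)\<^sup>2))"
  proof
    fix x :: "real^'n"
    have "a * s = \<mu> / 2 + L / 2" unfolding a_def \<mu>_def using dpos by (simp add: field_simps)
    hence "\<mu> / 2 * (norm x)\<^sup>2 = a * s * (x \<bullet> x) - L / 2 * (norm x)\<^sup>2"
      by (simp add: power2_norm_eq_inner algebra_simps)
    then show "h x = a * ((x - c) \<bullet> (M *v (x - c)) - s * (x \<bullet> x)) + (Pbar x u + L / 2 * (norm x)\<^sup>2)"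
      unfolding h_def E2 by (simp add: algebra_simps)
  qed
  have hconv: "convex_on UNIV h" unfolding hsplit by (rule convex_on_add[OF qc wc])
  have sc: "strongly_convex E"
    unfolding strongly_convex_def using mu hconv unfolding h_def by blast
  obtain g where g: "\<And>x. ((\<lambda>\<theta>. Pbar \<theta> u) has_derivative (\<lambda>h. g x \<bullet> h)) (at x)"
    using cb by (auto simp: curvature_bounded_def gradient_continuous_def)
  have Pc: "continuous_on UNIV (\<lambda>\<theta>. Pbar \<theta> u)"
    by (rule has_derivative_continuous_on) (use g in auto)
  have cont: "continuous_on UNIV E"
    unfolding E2[abs_def]
    by (intro continuous_intros Pc matrix_vector_mult_linear_continuous_on[THEN continuous_on_compose2]) auto
  have ex: "\<exists>x. \<forall>y. E x \<le> E y"
    by (rule exist_min[OF mu hconv h_def cont])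
  have un: "x = y" if "\<forall>z. E x \<le> E z" "\<forall>z. E y \<le> E z" for x y
    by (rule unique_min[OF mu hconv h_def that])
  show ?thesis using sc ex un by blast
qed

end
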